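(* Let $N$ be a phylogenetic network on $X$, and let $O$ and $R$ be the sets of omnians and reticulations of $N$. Then $$l(N)=p(N)=t(N)=|O|-m(\mathcal{B}_N),$$ where $m(\mathcal{B}_N)$ is the size of a maximum matching of $\mathcal{B}_N$.
   Context: $X$ is a nonempty finite set. A phylogenetic network on $X$ is a rooted acyclic digraph with no parallel arcs such that: the unique root has out-degree at least one; $X$ is exactly the set of vertices of out-degree zero (leaves), each of in-degree one; every other vertex either has in-degree one and out-degree at least two (a tree vertex) or in-degree at least two and out-degree one (a reticulation). If $|X|=1$, the network may also consist of the single vertex in $X$. An omnian is a non-leaf vertex all of whose children are reticulations (an omnian may itself be a reticulation). $\mathcal{B}_N$ is the bipartite graph with vertex bipartition $\{O,R\}$ (taken as disjoint copies) with an edge $\{o,r\}$ for each arc $(o,r)$ of $N$ with $o\in O$, $r\in R$. A phylogenetic network $N$ on $X$ is tree-based if it can be obtained from some phylogenetic $X$-tree (phylogenetic network with no reticulations) $T$ by first taking a subdivision of $T$ (new vertices are attachment points) and then adding new arcs $(u,v)$ where either $u$ and $v$ are both attachment points, or $u$ is a non-leaf vertex of $T$ and $v$ is an attachment point; equivalently, $N$ has a rooted spanning tree with the same root as $N$ all of whose leaves lie in $X$. Attaching a new leaf to $N$ means subdividing an arc of $N$ with a new vertex $u$ and adding a new leaf $y$ and the arc $(u,y)$. Define: $l(N)$ is the minimum, over all spanning trees of $N$ rooted at the root of $N$, of the number of leaves of the spanning tree not in $X$; $p(N)=d(N)-|X|$ where $d(N)$ is the smallest number of vertex-disjoint directed paths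 of $N$ that partition its vertex set; $t(N)$ is the minimum number of new leaves that need to be attached (successively) to $N$ so that the resulting network is tree-based. *)

theory Defs
  imports Main
begin

(* A network is given by a vertex set V, an arc set A (no parallel arcs, since
   A is a set of pairs) and a leaf set X.  Vertices are natural numbers, so that
   fresh vertices for leaf attachment always exist. *)

definition indeg :: "(nat \<times> nat) set \<Rightarrow> nat \<Rightarrow> nat" where
  "indeg A v = card {u. (u, v) \<in> A}"

definition outdeg :: "(nat \<times> nat) set \<Rightarrow> nat \<Rightarrow> nat" where
  "outdeg A v = card {w. (v, w) \<in> A}"

definition phylo_net :: "nat set \<Rightarrow> (nat \<times> nat) set \<Rightarrow> nat set \<Rightarrow> bool" where
  "phylo_net V A X \<longleftrightarrow>
     finite V \<and> X \<noteq> {} \<and> A \<subseteq> V \<times> V \<and>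
     ((card X = 1 \<and> V = X \<and> A = {}) \<or>
      (acyclic A \<and>
       (\<exists>!r. r \<in> V \<and> indeg A r = 0) \<and>
       (\<forall>r\<in>V. indeg A r = 0 \<longrightarrow> outdeg A r \<ge> 1) \<and>
       X = {v \<in> V. outdeg A v = 0} \<and>
       (\<forall>x\<in>X. indeg A x = 1) \<and>
       (\<forall>v\<in>V. indeg A v \<noteq> 0 \<and> v \<notin> X \<longrightarrow>
          (indeg A v = 1 \<and> outdeg A v \<ge> 2) \<or> (indeg A v \<ge> 2 \<and> outdeg A v = 1))))"

definition root :: "nat set \<Rightarrow> (nat \<times> nat) set \<Rightarrow> nat" where
  "root V A = (THE r. r \<in> V \<and> indeg A r = 0)"

definition reticulation :: "nat set \<Rightarrow> (nat \<times> nat) set \<Rightarrow> nat \<Rightarrow> bool" where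
  "reticulation V A v \<longleftrightarrow> v \<in> V \<and> indeg A v \<ge> 2"

definition reticulations :: "nat set \<Rightarrow> (nat \<times> nat) set \<Rightarrow> nat set" where
  "reticulations V A = {v \<in> V. reticulation V A v}"

definition omnians :: "nat set \<Rightarrow> (nat \<times> nat) set \<Rightarrow> nat set \<Rightarrow> nat set" where
  "omnians V A X = {v \<in> V. v \<notin> X \<and> (\<forall>w. (v, w) \<in> A \<longrightarrow> reticulation V A w)}"

(* matchings of the bipartite graph B_N: an edge {o,r} of B_N corresponds to an
   arc (o,r) of N with o an omnian and r a reticulation; since O and R are taken
   as disjoint copies, a matching is a set of such arcs no two sharing a tail
   and no two sharing a head. *)
definition BN_matching :: "nat set \<Rightarrow> (nat \<times> nat) set \<Rightarrow> nat set \<Rightarrow> (nat \<times> nat) set \<Rightarrow> bool" where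
  "BN_matching V A X M \<longleftrightarrow>
     M \<subseteq> A \<and> (\<forall>(o', r)\<in>M. o' \<in> omnians V A X \<and> r \<in> reticulations V A) \<and>
     (\<forall>(a, b)\<in>M. \<forall>(c, d)\<in>M. (a = c \<or> b = d) \<longrightarrow> (a, b) = (c, d))"

definition max_matching_size :: "nat set \<Rightarrow> (nat \<times> nat) set \<Rightarrow> nat set \<Rightarrow> nat" where
  "max_matching_size V A X = Max {card M | M. BN_matching V A X M}"

definition rooted_spanning_tree :: "nat set \<Rightarrow> (nat \<times> nat) set \<Rightarrow> (nat \<times> nat) set \<Rightarrow> bool" where
  "rooted_spanning_tree V A T \<longleftrightarrow>
     T \<subseteq> A \<and>
     (\<forall>v\<in>V. v \<noteq> root V A \<longrightarrow> card {u. (u, v) \<in> T} = 1) \<and>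
     (\<forall>v\<in>V. (root V A, v) \<in> T\<^sup>*)"

definition tree_leaves :: "nat set \<Rightarrow> (nat \<times> nat) set \<Rightarrow> nat set" where
  "tree_leaves V T = {v \<in> V. \<forall>w. (v, w) \<notin> T}"

definition l_num :: "nat set \<Rightarrow> (nat \<times> nat) set \<Rightarrow> nat set \<Rightarrow> nat" where
  "l_num V A X = (LEAST k. \<exists>T. rooted_spanning_tree V A T \<and> card (tree_leaves V T - X) = k)"

definition tree_based :: "nat set \<Rightarrow> (nat \<times> nat) set \<Rightarrow> nat set \<Rightarrow> bool" where
  "tree_based V A X \<longleftrightarrow> (\<exists>T. rooted_spanning_tree V A T \<and> tree_leaves V T \<subseteq> X)"

definition dpath :: "nat set \<Rightarrow> (nat \<times> nat) set \<Rightarrow> nat list \<Rightarrow> bool" where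
  "dpath V A p \<longleftrightarrow> p \<noteq> [] \<and> distinct p \<and> set p \<subseteq> V \<and>
     (\<forall>i. Suc i < length p \<longrightarrow> (p ! i, p ! Suc i) \<in> A)"

definition path_partition :: "nat set \<Rightarrow> (nat \<times> nat) set \<Rightarrow> nat list set \<Rightarrow> bool" where
  "path_partition V A P \<longleftrightarrow> finite P \<and> (\<forall>p\<in>P. dpath V A p) \<and>
     (\<forall>p\<in>P. \<forall>q\<in>P. p \<noteq> q \<longrightarrow> set p \<inter> set q = {}) \<and>
     (\<Union>p\<in>P. set p) = V"

definition d_num :: "nat set \<Rightarrow> (nat \<times> nat) set \<Rightarrow> nat" where
  "d_num V A = (LEAST k. \<exists>P. path_partition V A P \<and> card P = k)"

definition p_num :: "nat set \<Rightarrow> (nat \<times> nat) set \<Rightarrow> nat set \<Rightarrow> int" where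
  "p_num V A X = int (d_num V A) - int (card X)"

type_synonym net = "nat set \<times> (nat \<times> nat) set \<times> nat set"

definition attach_leaf_rel :: "(net \<times> net) set" where
  "attach_leaf_rel = {((V, A, X), (V', A', X')) | V A X V' A' X'.
     \<exists>u v w y. (u, v) \<in> A \<and> w \<notin> V \<and> y \<notin> V \<and> w \<noteq> y \<and>
       V' = V \<union> {w, y} \<and>
       A' = (A - {(u, v)}) \<union> {(u, w), (w, v), (w, y)} \<and>
       X' = X \<union> {y}}"

definition t_num :: "nat set \<Rightarrow> (nat \<times> nat) set \<Rightarrow> nat set \<Rightarrow> nat" where
  "t_num V A X = (LEAST k. \<exists>V' A' X'.
      ((V, A, X), (V', A', X')) \<in> attach_leaf_rel ^^ k \<and> tree_based V' A' X')"

end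

theory Submission
  imports Defs
begin

definition W :: "nat set \<Rightarrow> (nat \<times> nat) set \<Rightarrow> nat set \<Rightarrow> nat \<Rightarrow> bool" where
  "W V A X r \<longleftrightarrow> finite V \<and> A \<subseteq> V \<times> V \<and> acyclic A \<and> r \<in> V \<and>
     (\<forall>z\<in>V. (\<forall>x. (x, z) \<notin> A) \<longleftrightarrow> z = r) \<and> X = {v\<in>V. \<forall>z. (v, z) \<notin> A}"

lemma W_finA: "W V A X r \<Longrightarrow> finite A"
  unfolding W_def using finite_subset by blast

lemma W_root: assumes "W V A X r" shows "root V A = r"
proof -
  have fA: "finite A" using W_finA[OF assms] .
  have fin: "\<And>z. finite {u. (u, z) \<in> A}"
    by (rule finite_subset[of _ "fst ` A"]) (auto intro: finite_imageI[OF fA] simp: image_iff, force)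
  show ?thesis unfolding root_def
  proof (rule the_equality)
    show "r \<in> V \<and> indeg A r = 0" using assms unfolding W_def indeg_def by auto
  next
    fix y assume "y \<in> V \<and> indeg A y = 0"
    then have "y \<in> V" "{u. (u, y) \<in> A} = {}" using fin[of y] unfolding indeg_def by auto
    then show "y = r" using assms unfolding W_def by blast
  qed
qed

lemma phylo_W: assumes "phylo_net V A X" shows "W V A X (root V A)"
proof -
  have fV: "finite V" and AV: "A \<subseteq> V \<times> V" using assms unfolding phylo_net_def by auto
  have fA: "finite A" using fV AV finite_subset by blast
  have fin: "\<And>z. finite {u. (u, z) \<in> A}"
    by (rule finite_subset[of _ "fst ` A"]) (auto intro: finite_imageI[OF fA] simp: image_iff, force)
  have fin2: "\<And>z. finite {u. (z, u) \<in> A}"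
    by (rule finite_subset[of _ "snd ` A"]) (auto intro: finite_imageI[OF fA] simp: image_iff, force)
  have ind0: "\<And>z. indeg A z = 0 \<longleftrightarrow> (\<forall>x. (x, z) \<notin> A)" unfolding indeg_def using fin by auto
  have outd0: "\<And>z. outdeg A z = 0 \<longleftrightarrow> (\<forall>x. (z, x) \<notin> A)" unfolding outdeg_def using fin2 by auto
  from assms have "(card X = 1 \<and> V = X \<and> A = {}) \<or>
      (acyclic A \<and> (\<exists>!r. r \<in> V \<and> indeg A r = 0) \<and> X = {v \<in> V. outdeg A v = 0})"
    unfolding phylo_net_def by blast
  then show ?thesis
  proof
    assume h: "card X = 1 \<and> V = X \<and> A = {}"
    then obtain x where x: "V = {x}" by (metis card_1_singletonE)
    have "root V A = x" unfolding root_def x using h by (auto simp: indeg_def)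
    then show ?thesis using h x fV unfolding W_def by (auto simp: acyclic_def)
  next
    assume h: "acyclic A \<and> (\<exists>!r. r \<in> V \<and> indeg A r = 0) \<and> X = {v \<in> V. outdeg A v = 0}"
    then have ex: "\<exists>!r. r \<in> V \<and> (\<forall>x. (x, r) \<notin> A)" using ind0 by simp
    have rt: "root V A \<in> V \<and> (\<forall>x. (x, root V A) \<notin> A)"
      unfolding root_def ind0 using theI'[OF ex] by simp
    have u: "\<forall>z\<in>V. (\<forall>x. (x, z) \<notin> A) \<longleftrightarrow> z = root V A"
      using ex rt by metis
    have X: "X = {v\<in>V. \<forall>z. (v, z) \<notin> A}" using h outd0 by simp
    show ?thesis unfolding W_def using fV AV h rt u X by blast
  qed
qed

lemma ST_char: assumes "W V A X r"
  shows "rooted_spanning_tree V A T \<longleftrightarrow> (T \<subseteq> A \<and> (\<forall>v\<in>V. v \<noteq> r \<longrightarrow> card {u. (u, v) \<in> T} = 1))"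
proof
  assume "rooted_spanning_tree V A T" then show "T \<subseteq> A \<and> (\<forall>v\<in>V. v \<noteq> r \<longrightarrow> card {u. (u, v) \<in> T} = 1)"
    unfolding rooted_spanning_tree_def W_root[OF assms] by auto
next
  assume h: "T \<subseteq> A \<and> (\<forall>v\<in>V. v \<noteq> r \<longrightarrow> card {u. (u, v) \<in> T} = 1)"
  have wf: "wf A" using finite_acyclic_wf W_finA[OF assms] assms unfolding W_def by blast
  have AV: "A \<subseteq> V \<times> V" using assms unfolding W_def by auto
  have "z \<in> V \<longrightarrow> (r, z) \<in> T\<^sup>*" for z
  proof (induction z rule: wf_induct_rule[OF wf])
    case (1 z)
    show ?case
    proof
      assume zV: "z \<in> V"
      show "(r, z) \<in> T\<^sup>*"
      proof (cases "z = r")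
        case True then show ?thesis by simp
      next
        case False
        then have "card {u. (u, z) \<in> T} = 1" using h zV by auto
        then obtain u where u: "(u, z) \<in> T" by (metis (mono_tags, lifting) card_1_singletonE mem_Collect_eq singletonI)
        then have "(u, z) \<in> A" "u \<in> V" using h AV by auto
        then have "(r, u) \<in> T\<^sup>*" using 1 by blast
        then show ?thesis using u by (meson rtrancl.rtrancl_into_rtrancl)
      qed
    qed
  qed
  then show "rooted_spanning_tree V A T" unfolding rooted_spanning_tree_def W_root[OF assms] using h by auto
qed

lemma ST_par: assumes "W V A X r" "\<forall>v\<in>V. v \<noteq> r \<longrightarrow> (f v, v) \<in> A"
  shows "rooted_spanning_tree V A {(f v, v) | v. v \<in> V \<and> v \<noteq> r}"
proof -
  have "\<And>v. v \<in> V \<Longrightarrow> v \<noteq> r \<Longrightarrow> {u. (u, v) \<in> {(f v, v) | v. v \<in> V \<and> v \<noteq> r}} = {f v}" by auto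
  then show ?thesis unfolding ST_char[OF assms(1)] using assms(2) by auto
qed

lemma finA_in: "finite A \<Longrightarrow> finite {u. (u, z) \<in> A}"
  by (rule finite_subset[of _ "fst ` A"]) (auto simp: image_iff, force)

lemma uniq_par: assumes "finite A" "w \<in> V" "\<not> reticulation V A w" "(u, w) \<in> A" "(u', w) \<in> A"
  shows "u = u'"
proof -
  have "card {u. (u, w) \<in> A} \<le> Suc 0" using assms(2,3) unfolding reticulation_def indeg_def by auto
  then show ?thesis using card_le_Suc0_iff_eq[OF finA_in[OF assms(1)]] assms(4,5) by blast
qed

lemma match_sub: "BN_matching V A X M \<Longrightarrow> M \<subseteq> A"
  unfolding BN_matching_def by (rule conjunct1)

lemma match_prop: assumes "BN_matching V A X M" "(a, b) \<in> M" "(c, d) \<in> M" "a = c \<or> b = d"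
  shows "a = c \<and> b = d"
proof -
  have H: "\<forall>(a, b)\<in>M. \<forall>(c, d)\<in>M. a = c \<or> b = d \<longrightarrow> (a, b) = (c, d)"
    using assms(1) unfolding BN_matching_def by (elim conjE)
  have 1: "\<forall>(c', d')\<in>M. a = c' \<or> b = d' \<longrightarrow> (a, b) = (c', d')" using bspec[OF H assms(2)] by simp
  have 2: "a = c \<or> b = d \<longrightarrow> (a, b) = (c, d)" using bspec[OF 1 assms(3)] by simp
  then show ?thesis using assms(4) by simp
qed

lemma mm: assumes "finite A"
  shows "BN_matching V A X M \<Longrightarrow> card M \<le> max_matching_size V A X"
    and "\<exists>M. BN_matching V A X M \<and> card M = max_matching_size V A X"
proof -
  let ?S = "{card M | M. BN_matching V A X M}"
  have "?S \<subseteq> {..card A}"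
  proof
    fix k assume "k \<in> ?S"
    then obtain M where "BN_matching V A X M" "k = card M" by blast
    then have "M \<subseteq> A" "k = card M" using match_sub by auto
    then show "k \<in> {..card A}" using card_mono[OF assms] by simp
  qed
  then have fS: "finite ?S" using finite_subset by blast
  have "BN_matching V A X {}" unfolding BN_matching_def by simp
  then have ne: "?S \<noteq> {}" by blast
  show "BN_matching V A X M \<Longrightarrow> card M \<le> max_matching_size V A X"
    unfolding max_matching_size_def using Max_ge[OF fS] by blast
  show "\<exists>M. BN_matching V A X M \<and> card M = max_matching_size V A X"
    unfolding max_matching_size_def using Max_in[OF fS ne] by auto
qed

lemma match_inj: "BN_matching V A X M \<Longrightarrow> inj_on fst M"
proof (rule inj_onI)
  fix x y assume H: "BN_matching V A X M" "x \<in> M" "y \<in> M" "fst x = fst y"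
  obtain a b c d where xy: "x = (a, b)" "y = (c, d)" by (cases x, cases y) blast
  have "a = c \<and> b = d" by (rule match_prop[OF H(1)]) (use H xy in auto)
  then show "x = y" using xy by simp
qed

lemma match_card: "BN_matching V A X M \<Longrightarrow> card (fst ` M) = card M"
  by (rule card_image[OF match_inj])

lemma match_or: assumes "BN_matching V A X M" "(a, b) \<in> M"
  shows "a \<in> omnians V A X \<and> b \<in> reticulations V A"
proof -
  have H: "\<forall>(o', r)\<in>M. o' \<in> omnians V A X \<and> r \<in> reticulations V A"
    using assms(1) unfolding BN_matching_def by (elim conjE)
  show ?thesis using bspec[OF H assms(2)] by simp
qed

lemma match_fst: "BN_matching V A X M \<Longrightarrow> fst ` M \<subseteq> omnians V A X"
proof
  fix x assume "BN_matching V A X M" "x \<in> fst ` M"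
  then obtain b where "(x, b) \<in> M" by force
  then show "x \<in> omnians V A X" using match_or[OF \<open>BN_matching V A X M\<close>] by blast
qed

lemma omn_sub: "omnians V A X \<subseteq> V - X" unfolding omnians_def by auto

lemma finO: "W V A X r \<Longrightarrow> finite (omnians V A X)"
  using omn_sub unfolding W_def by (meson finite_Diff finite_subset)

lemma leaves_eq: assumes "W V A X r" "rooted_spanning_tree V A T"
  shows "tree_leaves V T - X = omnians V A X - {q. \<exists>z. (q, z) \<in> T}"
proof -
  have T: "T \<subseteq> A" "\<forall>v\<in>V. v \<noteq> r \<longrightarrow> card {u. (u, v) \<in> T} = 1"
    using assms(2) unfolding ST_char[OF assms(1)] by auto
  have fA: "finite A" using W_finA[OF assms(1)] .
  have AV: "A \<subseteq> V \<times> V" and rin: "\<forall>z\<in>V. (\<forall>x. (x, z) \<notin> A) \<longleftrightarrow> z = r"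
    using assms(1) unfolding W_def by auto
  show ?thesis
  proof
    show "tree_leaves V T - X \<subseteq> omnians V A X - {q. \<exists>z. (q, z) \<in> T}"
    proof
      fix v assume v: "v \<in> tree_leaves V T - X"
      then have vV: "v \<in> V" "v \<notin> X" "\<forall>w. (v, w) \<notin> T" unfolding tree_leaves_def by auto
      have "reticulation V A w" if vw: "(v, w) \<in> A" for w
      proof (rule ccontr)
        assume nr: "\<not> reticulation V A w"
        have wV: "w \<in> V" using vw AV by auto
        have "w \<noteq> r" using rin wV vw by blast
        then have "card {u. (u, w) \<in> T} = 1" using T wV by auto
        then obtain u where u: "(u, w) \<in> T" by (metis (mono_tags, lifting) card_1_singletonE mem_Collect_eq singletonI)
        then have "u = v" using uniq_par[OF fA wV nr] T vw by blast
        then show False using u vV by auto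
      qed
      then show "v \<in> omnians V A X - {q. \<exists>z. (q, z) \<in> T}" using vV unfolding omnians_def by auto
    qed
  next
    show "omnians V A X - {q. \<exists>z. (q, z) \<in> T} \<subseteq> tree_leaves V T - X"
      unfolding omnians_def tree_leaves_def by auto
  qed
qed

lemma match_img: "\<forall>a\<in>D. \<forall>b\<in>D. c a = c b \<longrightarrow> a = b \<Longrightarrow>
   \<forall>(a, b)\<in>(\<lambda>q. (q, c q)) ` D. \<forall>(x, y)\<in>(\<lambda>q. (q, c q)) ` D. a = x \<or> b = y \<longrightarrow> (a, b) = (x, y)"
  by blast

lemma l_lower: assumes "W V A X r" "rooted_spanning_tree V A T"
  shows "card (omnians V A X) - max_matching_size V A X \<le> card (tree_leaves V T - X)"
proof -
  let ?O = "omnians V A X"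
  define D where "D = ?O \<inter> {q. \<exists>z. (q, z) \<in> T}"
  have T: "T \<subseteq> A" "\<forall>v\<in>V. v \<noteq> r \<longrightarrow> card {u. (u, v) \<in> T} = 1"
    using assms(2) unfolding ST_char[OF assms(1)] by auto
  have fA: "finite A" using W_finA[OF assms(1)] .
  have AV: "A \<subseteq> V \<times> V" and rin: "\<forall>z\<in>V. (\<forall>x. (x, z) \<notin> A) \<longleftrightarrow> z = r"
    using assms(1) unfolding W_def by auto
  define c where "c q = (SOME z. (q, z) \<in> T)" for q
  have c: "q \<in> D \<Longrightarrow> (q, c q) \<in> T" for q unfolding D_def c_def by (auto intro: someI)
  define M where "M = (\<lambda>q. (q, c q)) ` D"
  have par1: "u = u'" if "(u, z) \<in> T" "(u', z) \<in> T" for u u' z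
  proof -
    have zV: "z \<in> V" using that T AV by auto
    have "z \<noteq> r" using rin zV that T by blast
    then have "card {u. (u, z) \<in> T} = 1" using T zV by auto
    then show ?thesis using that by (metis (mono_tags, lifting) card_1_singletonE mem_Collect_eq singletonD)
  qed
  have "BN_matching V A X M"
    unfolding BN_matching_def
  proof (intro conjI)
    show "M \<subseteq> A" unfolding M_def using c T by auto
    have "fst x \<in> ?O \<and> snd x \<in> reticulations V A" if "x \<in> M" for x
    proof -
      obtain q where q: "q \<in> D" "x = (q, c q)" using \<open>x \<in> M\<close> unfolding M_def by blast
      have qO: "q \<in> ?O" using q unfolding D_def by auto
      have "(q, c q) \<in> A" using c[OF q(1)] T by auto
      then have "reticulation V A (c q)" using qO unfolding omnians_def by auto
      then show ?thesis using q qO unfolding reticulations_def reticulation_def by auto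
    qed
    then show "\<forall>(o', r)\<in>M. o' \<in> ?O \<and> r \<in> reticulations V A" by (simp add: split_beta)
    show "\<forall>(a, b)\<in>M. \<forall>(c, d)\<in>M. a = c \<or> b = d \<longrightarrow> (a, b) = (c, d)"
    proof -
      have inj: "\<forall>a\<in>D. \<forall>b\<in>D. c a = c b \<longrightarrow> a = b"
      proof (intro ballI impI)
        fix a b assume ab: "a \<in> D" "b \<in> D" "c a = c b"
        have "(b, c a) \<in> T" using c[OF ab(2)] ab(3) by simp
        then show "a = b" using par1[OF c[OF ab(1)]] by blast
      qed
      show ?thesis unfolding M_def by (rule match_img[OF inj])
    qed
  qed
  then have "card M \<le> max_matching_size V A X" using mm(1)[OF fA] by blast
  moreover have "card M = card D" unfolding M_def by (rule card_image) (auto simp: inj_on_def)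
  moreover have "tree_leaves V T - X = ?O - D" using leaves_eq[OF assms] unfolding D_def by auto
  moreover have "card (?O - D) = card ?O - card D"
  proof (rule card_Diff_subset)
    show "D \<subseteq> ?O" unfolding D_def by auto
    then show "finite D" using finO[OF assms(1)] finite_subset by blast
  qed
  ultimately show ?thesis by simp
qed

lemma l_upper: assumes "W V A X r"
  shows "\<exists>T. rooted_spanning_tree V A T \<and> card (tree_leaves V T - X) \<le> card (omnians V A X) - max_matching_size V A X"
proof -
  let ?O = "omnians V A X"
  have fA: "finite A" using W_finA[OF assms(1)] .
  have AV: "A \<subseteq> V \<times> V" and rin: "\<forall>z\<in>V. (\<forall>x. (x, z) \<notin> A) \<longleftrightarrow> z = r"
    using assms(1) unfolding W_def by auto
  obtain M where M: "BN_matching V A X M" "card M = max_matching_size V A X" using mm(2)[OF fA] by blast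
  have MA: "M \<subseteq> A" using M unfolding BN_matching_def by auto
  have Mu: "\<And>a b c. (a, c) \<in> M \<Longrightarrow> (b, c) \<in> M \<Longrightarrow> a = b" using M unfolding BN_matching_def by fast
  define f where "f v = (if \<exists>q. (q, v) \<in> M then SOME q. (q, v) \<in> M else SOME u. (u, v) \<in> A)" for v
  have fA': "\<forall>v\<in>V. v \<noteq> r \<longrightarrow> (f v, v) \<in> A"
  proof (intro ballI impI)
    fix v assume "v \<in> V" "v \<noteq> r"
    then have "\<exists>u. (u, v) \<in> A" using rin by blast
    show "(f v, v) \<in> A"
    proof (cases "\<exists>q. (q, v) \<in> M")
      case True
      then have "(SOME q. (q, v) \<in> M, v) \<in> M" by (rule someI_ex)
      then show ?thesis unfolding f_def using True MA by auto
    next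
      case False
      have "(SOME q. (q, v) \<in> A, v) \<in> A" using \<open>\<exists>u. (u, v) \<in> A\<close> by (rule someI_ex)
      then show ?thesis unfolding f_def using False by auto
    qed
  qed
  define T where "T = {(f v, v) | v. v \<in> V \<and> v \<noteq> r}"
  have T: "rooted_spanning_tree V A T" unfolding T_def by (rule ST_par[OF assms fA'])
  have "(q, v) \<in> T" if "(q, v) \<in> M" for q v
  proof -
    have vV: "v \<in> V" using that MA AV by auto
    have "v \<noteq> r" using rin vV that MA by blast
    moreover have "f v = q" unfolding f_def using that Mu by (auto intro: some_equality)
    ultimately show ?thesis unfolding T_def using vV by auto
  qed
  then have sub: "fst ` M \<subseteq> ?O \<inter> {q. \<exists>z. (q, z) \<in> T}" using match_fst[OF M(1)] by force
  have fO: "finite ?O" using finO[OF assms] .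
  have "card (tree_leaves V T - X) = card (?O - {q. \<exists>z. (q, z) \<in> T})" using leaves_eq[OF assms T] by simp
  also have "\<dots> \<le> card (?O - fst ` M)" using sub fO by (intro card_mono) auto
  also have "\<dots> = card ?O - card (fst ` M)"
  proof (rule card_Diff_subset)
    show "fst ` M \<subseteq> ?O" using match_fst[OF M(1)] .
    then show "finite (fst ` M)" using fO finite_subset by blast
  qed
  also have "\<dots> = card ?O - card M" using match_card[OF M(1)] by simp
  finally show ?thesis using T M(2) by auto
qed

lemma l_formula: assumes "W V A X r"
  shows "l_num V A X = card (omnians V A X) - max_matching_size V A X"
  unfolding l_num_def
proof (rule Least_equality)
  obtain T where T: "rooted_spanning_tree V A T" "card (tree_leaves V T - X) \<le> card (omnians V A X) - max_matching_size V A X"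
    using l_upper[OF assms] by blast
  then have "card (tree_leaves V T - X) = card (omnians V A X) - max_matching_size V A X"
    using l_lower[OF assms T(1)] by linarith
  then show "\<exists>T. rooted_spanning_tree V A T \<and> card (tree_leaves V T - X) = card (omnians V A X) - max_matching_size V A X"
    using T by blast
next
  fix y assume "\<exists>T. rooted_spanning_tree V A T \<and> card (tree_leaves V T - X) = y"
  then show "card (omnians V A X) - max_matching_size V A X \<le> y" using l_lower[OF assms] by blast
qed

lemma reach_path: "(\<forall>i. Suc i < length p \<longrightarrow> (p!i, p!Suc i) \<in> R) \<Longrightarrow> k < length p \<Longrightarrow> (p!0, p!k) \<in> R\<^sup>*"
proof (induction k)
  case 0 then show ?case by simp
next
  case (Suc k)
  then have "(p!0, p!k) \<in> R\<^sup>*" "(p!k, p!Suc k) \<in> R" by auto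
  then show ?case by (rule rtrancl_into_rtrancl)
qed

lemma consec_append:
  assumes "\<forall>i. Suc i < length p \<longrightarrow> (p!i, p!Suc i) \<in> R" "\<forall>i. Suc i < length q \<longrightarrow> (q!i, q!Suc i) \<in> R"
    "p \<noteq> []" "q \<noteq> []" "(last p, hd q) \<in> R"
  shows "\<forall>i. Suc i < length (p @ q) \<longrightarrow> ((p @ q)!i, (p @ q)!Suc i) \<in> R"
proof (intro allI impI)
  fix i assume i: "Suc i < length (p @ q)"
  consider "Suc i < length p" | "Suc i = length p" | "Suc i > length p" by linarith
  then show "((p @ q)!i, (p @ q)!Suc i) \<in> R"
  proof cases
    case 1 then show ?thesis using assms(1) by (simp add: nth_append)
  next
    case 2
    then have "i = length p - 1" by simp
    then have "(p @ q)!i = last p" using assms(3) 2 by (simp add: nth_append last_conv_nth)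
    moreover have "(p @ q)!Suc i = hd q" using 2 assms(4) by (simp add: nth_append hd_conv_nth)
    ultimately show ?thesis using assms(5) by simp
  next
    case 3
    then have "(p @ q)!i = q!(i - length p)" "(p @ q)!Suc i = q!Suc (i - length p)"
      by (simp_all add: nth_append Suc_diff_le)
    moreover have "Suc (i - length p) < length q" using 3 i by simp
    ultimately show ?thesis using assms(2) by simp
  qed
qed

lemma pp_facts: assumes "path_partition V A P"
  shows "finite P" "\<And>p. p \<in> P \<Longrightarrow> dpath V A p"
    "\<And>p q. p \<in> P \<Longrightarrow> q \<in> P \<Longrightarrow> p \<noteq> q \<Longrightarrow> set p \<inter> set q = {}"
    "(\<Union>p\<in>P. set p) = V"
  using assms unfolding path_partition_def by auto

lemma dpath_facts: assumes "dpath V A p"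
  shows "p \<noteq> []" "distinct p" "set p \<subseteq> V" "\<forall>i. Suc i < length p \<longrightarrow> (p ! i, p ! Suc i) \<in> A"
  using assms unfolding dpath_def by auto

lemma same_path: "path_partition V A P \<Longrightarrow> p \<in> P \<Longrightarrow> q \<in> P \<Longrightarrow> x \<in> set p \<Longrightarrow> x \<in> set q \<Longrightarrow> p = q"
  using pp_facts(3) by blast

lemma LF:
  assumes V: "finite V" "A \<subseteq> V \<times> V" "acyclic A"
  shows "finite S \<Longrightarrow> S \<subseteq> A \<Longrightarrow> (\<forall>a b c. (a, b) \<in> S \<longrightarrow> (a, c) \<in> S \<longrightarrow> b = c) \<Longrightarrow>
    (\<forall>a b c. (a, c) \<in> S \<longrightarrow> (b, c) \<in> S \<longrightarrow> a = b) \<Longrightarrow>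
    \<exists>P. path_partition V A P \<and> card P + card S = card V \<and> (\<forall>p\<in>P. \<forall>i. Suc i < length p \<longrightarrow> (p!i, p!Suc i) \<in> S)"
proof (induction S rule: finite_induct)
  case empty
  let ?P = "(\<lambda>v. [v]) ` V"
  have "path_partition V A ?P"
    unfolding path_partition_def dpath_def using V(1) by auto
  moreover have "card ?P = card V" by (rule card_image) (auto simp: inj_on_def)
  ultimately show ?case by auto
next
  case (insert e S)
  obtain a b where e: "e = (a, b)" by (cases e)
  have SA: "S \<subseteq> A" using insert.prems(1) by auto
  have Sf: "\<forall>a b c. (a, b) \<in> S \<longrightarrow> (a, c) \<in> S \<longrightarrow> b = c" using insert.prems(2) by blast
  have Si: "\<forall>a b c. (a, c) \<in> S \<longrightarrow> (b, c) \<in> S \<longrightarrow> a = b" using insert.prems(3) by blast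
  obtain P where P: "path_partition V A P" "card P + card S = card V"
    and cons: "\<forall>p\<in>P. \<forall>i. Suc i < length p \<longrightarrow> (p!i, p!Suc i) \<in> S"
    using insert.IH[OF SA Sf Si] by blast
  have abA: "(a, b) \<in> A" using insert.prems(1) e by auto
  then have aV: "a \<in> V" and bV: "b \<in> V" using V(2) by auto
  have noa: "(a, c) \<notin> S" for c
  proof
    assume "(a, c) \<in> S"
    then have "b = c" using insert.prems(2) e by blast
    then show False using \<open>(a, c) \<in> S\<close> insert.hyps(2) e by simp
  qed
  have nob: "(c, b) \<notin> S" for c
  proof
    assume "(c, b) \<in> S"
    then have "a = c" using insert.prems(3) e by blast
    then show False using \<open>(c, b) \<in> S\<close> insert.hyps(2) e by simp
  qed
  note PF = pp_facts[OF P(1)]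
  obtain pa where pa: "pa \<in> P" "a \<in> set pa" using PF(4) aV by blast
  obtain i where i: "i < length pa" "pa ! i = a" using pa(2) by (metis in_set_conv_nth)
  have "\<not> Suc i < length pa"
  proof
    assume "Suc i < length pa"
    then have "(a, pa ! Suc i) \<in> S" using cons pa(1) i by auto
    then show False using noa by blast
  qed
  then have ia: "i = length pa - 1" using i by simp
  have pane: "pa \<noteq> []" using pa by auto
  have lasta: "last pa = a" using i ia pane by (simp add: last_conv_nth)
  obtain pb where pb: "pb \<in> P" "b \<in> set pb" using PF(4) bV by blast
  obtain j where j: "j < length pb" "pb ! j = b" using pb(2) by (metis in_set_conv_nth)
  have j0: "j = 0"
  proof (rule ccontr)
    assume "j \<noteq> 0"
    then obtain j' where j': "j = Suc j'" by (cases j) auto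
    then have "(pb ! j', b) \<in> S" using cons pb(1) j by auto
    then show False using nob by blast
  qed
  have pbne: "pb \<noteq> []" using pb by auto
  have hdb: "hd pb = b" using j j0 pbne by (simp add: hd_conv_nth)
  have dpa: "dpath V A pa" and dpb: "dpath V A pb" using PF(2) pa(1) pb(1) by auto
  have cpa: "\<forall>i. Suc i < length pa \<longrightarrow> (pa!i, pa!Suc i) \<in> S" using cons pa(1) by blast
  have cpb: "\<forall>i. Suc i < length pb \<longrightarrow> (pb!i, pb!Suc i) \<in> S" using cons pb(1) by blast
  have neq: "pa \<noteq> pb"
  proof
    assume eq: "pa = pb"
    have "(pb!0, pb!i) \<in> S\<^sup>*" using reach_path[OF cpb, of i] i eq by simp
    then have "(b, a) \<in> A\<^sup>*" using j j0 i eq rtrancl_mono[OF SA] by auto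
    then have "(a, a) \<in> A\<^sup>+" using abA by (meson rtrancl_into_trancl2)
    then show False using V(3) unfolding acyclic_def by blast
  qed
  have dab: "set pa \<inter> set pb = {}" using PF(3)[OF pa(1) pb(1) neq] .
  define q where "q = pa @ pb"
  have qcons: "\<forall>i. Suc i < length q \<longrightarrow> (q!i, q!Suc i) \<in> insert e S"
    unfolding q_def
    by (rule consec_append) (use cpa cpb pane pbne lasta hdb e in auto)
  have dq: "dpath V A q"
    unfolding dpath_def
  proof (intro conjI)
    show "q \<noteq> []" unfolding q_def using pane by simp
    show "distinct q" unfolding q_def using dpath_facts(2)[OF dpa] dpath_facts(2)[OF dpb] dab by simp
    show "set q \<subseteq> V" unfolding q_def using dpath_facts(3)[OF dpa] dpath_facts(3)[OF dpb] by simp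
    show "\<forall>i. Suc i < length q \<longrightarrow> (q ! i, q ! Suc i) \<in> A" using qcons insert.prems(1) by blast
  qed
  have disjq: "set q \<inter> set p = {}" if "p \<in> P - {pa, pb}" for p
    using PF(3)[OF pa(1), of p] PF(3)[OF pb(1), of p] that unfolding q_def by auto
  have qnot: "q \<notin> P - {pa, pb}"
  proof
    assume "q \<in> P - {pa, pb}"
    then have "set q \<inter> set pa = {}" using PF(3)[OF _ pa(1), of q] by auto
    then show False using pane unfolding q_def by auto
  qed
  define P' where "P' = insert q (P - {pa, pb})"
  have "path_partition V A P'"
    unfolding path_partition_def
  proof (intro conjI)
    show "finite P'" unfolding P'_def using PF(1) by simp
    show "\<forall>p\<in>P'. dpath V A p" unfolding P'_def using dq PF(2) by auto
    show "\<forall>p\<in>P'. \<forall>p'\<in>P'. p \<noteq> p' \<longrightarrow> set p \<inter> set p' = {}"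
      unfolding P'_def using disjq PF(3) by (auto simp: Int_commute)
    have "(\<Union>p\<in>P'. set p) = set q \<union> (\<Union>p\<in>P - {pa, pb}. set p)" unfolding P'_def by simp
    also have "\<dots> = (\<Union>p\<in>P. set p)" unfolding q_def using pa(1) pb(1) by auto
    finally show "(\<Union>p\<in>P'. set p) = V" using PF(4) by simp
  qed
  moreover have "card P' + card (insert e S) = card V"
  proof -
    have c2: "card (P - {pa, pb}) = card P - 2"
      using card_Diff_subset[of "{pa, pb}" P] pa(1) pb(1) neq by simp
    have "card P \<ge> 2"
    proof -
      have "card {pa, pb} \<le> card P" using pa(1) pb(1) PF(1) by (intro card_mono) auto
      then show ?thesis using neq by simp
    qed
    moreover have "card P' = card (P - {pa, pb}) + 1"
      unfolding P'_def using qnot PF(1) by simp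
    moreover have "card (insert e S) = card S + 1" using insert.hyps by simp
    ultimately show ?thesis using P(2) c2 by simp
  qed
  moreover have "\<forall>p\<in>P'. \<forall>i. Suc i < length p \<longrightarrow> (p!i, p!Suc i) \<in> insert e S"
    unfolding P'_def using qcons cons by auto
  ultimately show ?case by blast
qed

lemma mk_matching: "M \<subseteq> A \<Longrightarrow> (\<forall>x\<in>M. fst x \<in> omnians V A X \<and> snd x \<in> reticulations V A) \<Longrightarrow>
  (\<forall>x\<in>M. \<forall>y\<in>M. fst x = fst y \<or> snd x = snd y \<longrightarrow> x = y) \<Longrightarrow> BN_matching V A X M"
  unfolding BN_matching_def split_beta prod.collapse by blast

lemma W_facts: assumes "W V A X r"
  shows "finite V" "A \<subseteq> V \<times> V" "acyclic A" "X = {v\<in>V. \<forall>z. (v, z) \<notin> A}" "X \<subseteq> V"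
  using assms unfolding W_def by auto

lemma card_VXO: assumes "W V A X r"
  shows "card (V - X - omnians V A X) + card X + card (omnians V A X) = card V"
proof -
  have fV: "finite V" and XV: "X \<subseteq> V" using W_facts[OF assms] by auto
  have OV: "omnians V A X \<subseteq> V - X" by (rule omn_sub)
  have "card (V - X - omnians V A X) = card (V - X) - card (omnians V A X)"
    using OV fV by (meson card_Diff_subset finite_Diff finite_subset)
  moreover have "card (V - X) = card V - card X" using XV fV by (meson card_Diff_subset finite_subset)
  moreover have "card (omnians V A X) \<le> card (V - X)" using OV fV by (simp add: card_mono)
  moreover have "card X \<le> card V" using XV fV by (simp add: card_mono)
  ultimately show ?thesis by linarith
qed

lemma p_lower: assumes W: "W V A X r" and P: "path_partition V A P"
  shows "card X + card (omnians V A X) \<le> card P + max_matching_size V A X"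
proof -
  let ?O = "omnians V A X"
  note PF = pp_facts[OF P]
  note WF = W_facts[OF W]
  have fA: "finite A" using W_finA[OF W] .
  define Tl where "Tl = {p!i | p i. p \<in> P \<and> Suc i < length p}"
  define L where "L = last ` P"
  have cov: "V = Tl \<union> L"
  proof
    show "V \<subseteq> Tl \<union> L"
    proof
      fix v assume "v \<in> V"
      then obtain p where p: "p \<in> P" "v \<in> set p" using PF(4) by blast
      then obtain i where i: "i < length p" "p ! i = v" by (metis in_set_conv_nth)
      show "v \<in> Tl \<union> L"
      proof (cases "Suc i < length p")
        case True then show ?thesis unfolding Tl_def using p i by blast
      next
        case False
        then have "i = length p - 1" "p \<noteq> []" using i by auto
        then have "last p = v" using i by (simp add: last_conv_nth)
        then show ?thesis unfolding L_def using p by blast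
      qed
    qed
    show "Tl \<union> L \<subseteq> V"
    proof
      fix v assume "v \<in> Tl \<union> L"
      then obtain p where p: "p \<in> P" "v \<in> set p"
      proof
        assume "v \<in> Tl"
        then obtain p i where "p \<in> P" "Suc i < length p" "v = p ! i" unfolding Tl_def by blast
        then show ?thesis using that by (meson Suc_lessD nth_mem)
      next
        assume "v \<in> L"
        then obtain p where "p \<in> P" "v = last p" unfolding L_def by blast
        then show ?thesis using that dpath_facts(1)[OF PF(2)] by (meson last_in_set)
      qed
      then show "v \<in> V" using PF(4) by blast
    qed
  qed
  have disj: "Tl \<inter> L = {}"
  proof (rule ccontr)
    assume "Tl \<inter> L \<noteq> {}"
    then obtain p i q where pq: "p \<in> P" "Suc i < length p" "q \<in> P" "p ! i = last q"
      unfolding Tl_def L_def by blast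
    have "last q \<in> set q" using dpath_facts(1)[OF PF(2)[OF pq(3)]] by simp
    moreover have "p ! i \<in> set p" using pq(2) by simp
    ultimately have "p = q" using same_path[OF P pq(1) pq(3)] pq(4) by simp
    then have "p ! i = p ! (length p - 1)" using pq dpath_facts(1)[OF PF(2)[OF pq(3)]] by (simp add: last_conv_nth)
    then have "i = length p - 1" using dpath_facts(2)[OF PF(2)[OF pq(1)]] pq(2) by (simp add: nth_eq_iff_index_eq)
    then show False using pq(2) by simp
  qed
  have injL: "inj_on last P"
  proof (rule inj_onI)
    fix p q assume "p \<in> P" "q \<in> P" "last p = last q"
    then show "p = q" using same_path[OF P, of p q "last p"] dpath_facts(1)[OF PF(2)] by (metis last_in_set)
  qed
  have fTl: "finite Tl" using cov WF(1) by (metis finite_Un)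
  have fL: "finite L" unfolding L_def using PF(1) by simp
  have cV: "card V = card Tl + card P"
    using card_Un_disjoint[OF fTl fL disj] cov card_image[OF injL] unfolding L_def by simp
  have TlVX: "Tl \<subseteq> V - X"
  proof
    fix v assume "v \<in> Tl"
    then obtain p i where pi: "p \<in> P" "Suc i < length p" "v = p ! i" unfolding Tl_def by blast
    then have "(v, p ! Suc i) \<in> A" using dpath_facts(4)[OF PF(2)[OF pi(1)]] by simp
    then show "v \<in> V - X" using WF(2,4) by auto
  qed
  define Mp where "Mp = {(p!i, p!Suc i) | p i. p \<in> P \<and> Suc i < length p \<and> p!i \<in> ?O}"
  have MpA: "Mp \<subseteq> A" unfolding Mp_def using dpath_facts(4)[OF PF(2)] by blast
  have "BN_matching V A X Mp"
  proof (rule mk_matching[OF MpA])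
    show "\<forall>x\<in>Mp. fst x \<in> ?O \<and> snd x \<in> reticulations V A"
    proof
      fix x assume "x \<in> Mp"
      then obtain p i where pi: "p \<in> P" "Suc i < length p" "p!i \<in> ?O" "x = (p!i, p!Suc i)"
        unfolding Mp_def by blast
      then have "(p!i, p!Suc i) \<in> A" using dpath_facts(4)[OF PF(2)[OF pi(1)]] by simp
      then show "fst x \<in> ?O \<and> snd x \<in> reticulations V A"
        using pi unfolding omnians_def reticulations_def reticulation_def by auto
    qed
    show "\<forall>x\<in>Mp. \<forall>y\<in>Mp. fst x = fst y \<or> snd x = snd y \<longrightarrow> x = y"
    proof (intro ballI impI)
      fix x y assume "x \<in> Mp" "y \<in> Mp" and eq: "fst x = fst y \<or> snd x = snd y"
      then obtain p i q j where pi: "p \<in> P" "Suc i < length p" "x = (p!i, p!Suc i)"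
        and qj: "q \<in> P" "Suc j < length q" "y = (q!j, q!Suc j)"
        unfolding Mp_def by blast
      have dp: "distinct p" using dpath_facts(2)[OF PF(2)[OF pi(1)]] .
      show "x = y"
      proof (cases "fst x = fst y")
        case True
        then have "p!i = q!j" using pi qj by simp
        then have "p = q" using same_path[OF P pi(1) qj(1), of "p!i"] pi(2) qj(2) by (metis Suc_lessD nth_mem)
        then have "i = j" using \<open>p!i = q!j\<close> dp pi(2) qj(2) by (simp add: nth_eq_iff_index_eq)
        then show ?thesis using pi qj \<open>p = q\<close> by simp
      next
        case False
        then have "p!Suc i = q!Suc j" using pi qj eq by simp
        then have "p = q" using same_path[OF P pi(1) qj(1), of "p!Suc i"] pi(2) qj(2) by (metis nth_mem)
        then have "Suc i = Suc j" using \<open>p!Suc i = q!Suc j\<close> dp pi(2) qj(2) by (simp add: nth_eq_iff_index_eq)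
        then show ?thesis using pi qj \<open>p = q\<close> by simp
      qed
    qed
  qed
  note Mm = this
  have "Tl \<inter> ?O \<subseteq> fst ` Mp"
  proof
    fix v assume "v \<in> Tl \<inter> ?O"
    then obtain p i where "p \<in> P" "Suc i < length p" "v = p ! i" "v \<in> ?O" unfolding Tl_def by blast
    then have "(v, p!Suc i) \<in> Mp" unfolding Mp_def by blast
    then show "v \<in> fst ` Mp" by force
  qed
  then have "card (Tl \<inter> ?O) \<le> card (fst ` Mp)"
    using MpA fA by (meson card_mono finite_imageI finite_subset)
  also have "\<dots> = card Mp" using match_card[OF Mm] .
  also have "\<dots> \<le> max_matching_size V A X" using mm(1)[OF fA Mm] .
  finally have c1: "card (Tl \<inter> ?O) \<le> max_matching_size V A X" .
  have c2: "card (Tl - ?O) \<le> card (V - X - ?O)" using TlVX WF(1) by (intro card_mono) auto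
  have c3: "card Tl = card (Tl \<inter> ?O) + card (Tl - ?O)"
    using fTl by (metis card_Int_Diff)
  show ?thesis using cV c1 c2 c3 card_VXO[OF W] by linarith
qed

lemma p_upper: assumes W: "W V A X r"
  shows "\<exists>P. path_partition V A P \<and> card P + max_matching_size V A X = card X + card (omnians V A X)"
proof -
  let ?O = "omnians V A X"
  note WF = W_facts[OF W]
  have fA: "finite A" using W_finA[OF W] .
  obtain M where M: "BN_matching V A X M" "card M = max_matching_size V A X" using mm(2)[OF fA] by blast
  have MA: "M \<subseteq> A" using match_sub[OF M(1)] .
  define c where "c v = (SOME w. (v, w) \<in> A \<and> \<not> reticulation V A w)" for v
  have c: "(v, c v) \<in> A \<and> \<not> reticulation V A (c v)" if "v \<in> V - X - ?O" for v
  proof -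
    have "\<exists>w. (v, w) \<in> A \<and> \<not> reticulation V A w" using that unfolding omnians_def by auto
    then show ?thesis unfolding c_def by (rule someI_ex)
  qed
  define S2 where "S2 = (\<lambda>v. (v, c v)) ` (V - X - ?O)"
  define S where "S = M \<union> S2"
  have S2A: "S2 \<subseteq> A" unfolding S2_def using c by auto
  have SA: "S \<subseteq> A" unfolding S_def using MA S2A by auto
  have fS: "finite S" using SA fA finite_subset by blast
  have MO: "a \<in> ?O" if "(a, b) \<in> M" for a b using match_or[OF M(1) that] by simp
  have MR: "reticulation V A b" if "(a, b) \<in> M" for a b
    using match_or[OF M(1) that] unfolding reticulations_def by simp
  have S2O: "a \<in> V - X - ?O \<and> b = c a" if "(a, b) \<in> S2" for a b using that unfolding S2_def by auto
  have Sfun: "\<forall>a b d. (a, b) \<in> S \<longrightarrow> (a, d) \<in> S \<longrightarrow> b = d"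
  proof (intro allI impI)
    fix a b d assume ab: "(a, b) \<in> S" and ad: "(a, d) \<in> S"
    show "b = d"
    proof (cases "(a, b) \<in> M")
      case True
      then have "a \<in> ?O" by (rule MO)
      then have "(a, d) \<in> M" using ad S2O unfolding S_def by blast
      then show ?thesis using match_prop[OF M(1) True] by blast
    next
      case False
      then have "(a, b) \<in> S2" using ab unfolding S_def by blast
      then have aa: "a \<in> V - X - ?O" "b = c a" using S2O by auto
      then have "(a, d) \<notin> M" using MO by blast
      then have "(a, d) \<in> S2" using ad unfolding S_def by blast
      then show ?thesis using aa S2O by blast
    qed
  qed
  have inj: "\<forall>a b d. (a, d) \<in> S \<longrightarrow> (b, d) \<in> S \<longrightarrow> a = b"
  proof (intro allI impI)
    fix a b d assume ad: "(a, d) \<in> S" and bd: "(b, d) \<in> S"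
    show "a = b"
    proof (cases "(a, d) \<in> M")
      case True
      then have "reticulation V A d" by (rule MR)
      then have "(b, d) \<in> M" using bd S2O c unfolding S_def by blast
      then show ?thesis using match_prop[OF M(1) True] by blast
    next
      case False
      then have "(a, d) \<in> S2" using ad unfolding S_def by blast
      then have aa: "a \<in> V - X - ?O" "d = c a" using S2O by auto
      then have nr: "\<not> reticulation V A d" using c by blast
      then have "(b, d) \<notin> M" using MR by blast
      then have "(b, d) \<in> S2" using bd unfolding S_def by blast
      then have bb: "b \<in> V - X - ?O" "d = c b" using S2O by auto
      have dV: "d \<in> V" using c[OF aa(1)] aa(2) WF(2) by auto
      show ?thesis using uniq_par[OF fA dV nr] c[OF aa(1)] c[OF bb(1)] aa(2) bb(2) by simp
    qed
  qed
  obtain P where P: "path_partition V A P" "card P + card S = card V"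
    using LF[OF WF(1-3) fS SA Sfun inj] by blast
  have fM: "finite M" using MA fA finite_subset by blast
  have fS2: "finite S2" unfolding S2_def using WF(1) by simp
  have "M \<inter> S2 = {}" using MO S2O by auto
  then have "card S = card M + card S2" unfolding S_def using card_Un_disjoint[OF fM fS2] by simp
  moreover have "card S2 = card (V - X - ?O)" unfolding S2_def by (rule card_image) (auto simp: inj_on_def)
  ultimately show ?thesis using P card_VXO[OF W] M(2) by (intro exI[of _ P]) auto
qed

lemma m_le_O: assumes "W V A X r" shows "max_matching_size V A X \<le> card (omnians V A X)"
proof -
  have fA: "finite A" using W_finA[OF assms] .
  obtain M where M: "BN_matching V A X M" "card M = max_matching_size V A X" using mm(2)[OF fA] by blast
  have "card (fst ` M) \<le> card (omnians V A X)" using match_fst[OF M(1)] finO[OF assms] by (rule card_mono[rotated])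
  then show ?thesis using match_card[OF M(1)] M(2) by simp
qed

lemma d_formula: assumes W: "W V A X r"
  shows "d_num V A = card X + card (omnians V A X) - max_matching_size V A X"
  unfolding d_num_def
proof (rule Least_equality)
  show "\<exists>P. path_partition V A P \<and> card P = card X + card (omnians V A X) - max_matching_size V A X"
    using p_upper[OF W] by (metis add_diff_cancel_right')
next
  fix y assume "\<exists>P. path_partition V A P \<and> card P = y"
  then show "card X + card (omnians V A X) - max_matching_size V A X \<le> y" using p_lower[OF W] by fastforce
qed

lemma rt_src: "(a, b) \<in> r\<^sup>* \<Longrightarrow> (\<forall>z. (a, z) \<notin> r) \<Longrightarrow> a = b"
  by (erule converse_rtranclE) auto

lemma rt_tgt: "(a, b) \<in> r\<^sup>* \<Longrightarrow> (\<forall>z. (z, b) \<notin> r) \<Longrightarrow> a = b"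
  by (erule rtranclE) auto

lemma att_W:
  assumes W: "W V A X r" and uv: "(u, v) \<in> A" and w: "w \<notin> V" and y: "y \<notin> V" "w \<noteq> y"
    and V': "V' = V \<union> {w, y}" and A': "A' = (A - {(u, v)}) \<union> {(u, w), (w, v), (w, y)}"
    and X': "X' = X \<union> {y}"
  shows "W V' A' X' r"
proof -
  note WF = W_facts[OF W]
  have uV: "u \<in> V" and vV: "v \<in> V" using uv WF(2) by auto
  have rin: "\<forall>z\<in>V. (\<forall>x. (x, z) \<notin> A) \<longleftrightarrow> z = r" and rV: "r \<in> V" using W unfolding W_def by auto
  have vr: "v \<noteq> r" using rin vV uv by blast
  have ac: "acyclic (insert (w, y) (insert (w, v) (insert (u, w) A)))"
  proof -
    have 1: "(w, u) \<notin> A\<^sup>*"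
    proof
      assume "(w, u) \<in> A\<^sup>*"
      moreover have "\<forall>z. (w, z) \<notin> A" using w WF(2) by auto
      ultimately have "w = u" by (rule rt_src)
      then show False using w uV by simp
    qed
    have 2: "(v, w) \<notin> (insert (u, w) A)\<^sup>*"
    proof
      assume "(v, w) \<in> (insert (u, w) A)\<^sup>*"
      then have "(v, w) \<in> A\<^sup>* \<or> ((v, u) \<in> A\<^sup>* \<and> (w, w) \<in> A\<^sup>*)" unfolding rtrancl_insert by blast
      then show False
      proof
        assume "(v, w) \<in> A\<^sup>*"
        moreover have "\<forall>z. (z, w) \<notin> A" using w WF(2) by auto
        ultimately have "v = w" by (rule rt_tgt)
        then show False using w vV by simp
      next
        assume "(v, u) \<in> A\<^sup>* \<and> (w, w) \<in> A\<^sup>*"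
        then have "(u, u) \<in> A\<^sup>+" using uv by (meson rtrancl_into_trancl2)
        then show False using WF(3) unfolding acyclic_def by blast
      qed
    qed
    have 3: "(y, w) \<notin> (insert (w, v) (insert (u, w) A))\<^sup>*"
    proof
      assume "(y, w) \<in> (insert (w, v) (insert (u, w) A))\<^sup>*"
      moreover have "\<forall>z. (y, z) \<notin> insert (w, v) (insert (u, w) A)" using y uV WF(2) by auto
      ultimately have "y = w" by (rule rt_src)
      then show False using y by simp
    qed
    show ?thesis using WF(3) 1 2 3 by simp
  qed
  have "A' \<subseteq> insert (w, y) (insert (w, v) (insert (u, w) A))" unfolding A' by auto
  then have acA': "acyclic A'" using ac acyclic_subset by blast
  have AV': "A' \<subseteq> V' \<times> V'" unfolding A' V' using WF(2) uV vV by auto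
  have root': "\<forall>z\<in>V'. (\<forall>x. (x, z) \<notin> A') \<longleftrightarrow> z = r"
  proof
    fix z assume zV': "z \<in> V'"
    show "(\<forall>x. (x, z) \<notin> A') \<longleftrightarrow> z = r"
    proof (cases "z \<in> V")
      case True
      then have "z \<noteq> w" "z \<noteq> y" using w y by auto
      show ?thesis
      proof (cases "z = v")
        case True
        then show ?thesis unfolding A' using vr by auto
      next
        case False
        then have "(\<forall>x. (x, z) \<notin> A') \<longleftrightarrow> (\<forall>x. (x, z) \<notin> A)" unfolding A' using \<open>z \<noteq> w\<close> \<open>z \<noteq> y\<close> by auto
        then show ?thesis using rin True by simp
      qed
    next
      case False
      then have "z = w \<or> z = y" using zV' V' by auto
      then show ?thesis unfolding A' using rV w y by auto
    qed
  qed
  have X'': "X' = {z\<in>V'. \<forall>t. (z, t) \<notin> A'}"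
  proof
    show "X' \<subseteq> {z\<in>V'. \<forall>t. (z, t) \<notin> A'}"
    proof
      fix z assume "z \<in> X'"
      then have "z = y \<or> z \<in> X" unfolding X' by auto
      then show "z \<in> {z\<in>V'. \<forall>t. (z, t) \<notin> A'}"
      proof
        assume "z = y" then show ?thesis unfolding V' A' using y WF(2) uV by auto
      next
        assume zX: "z \<in> X"
        then have "z \<in> V" "\<forall>t. (z, t) \<notin> A" using WF(4) by auto
        then show ?thesis unfolding V' A' using uv w by auto
      qed
    qed
    show "{z\<in>V'. \<forall>t. (z, t) \<notin> A'} \<subseteq> X'"
    proof
      fix z assume z: "z \<in> {z\<in>V'. \<forall>t. (z, t) \<notin> A'}"
      then have "z \<noteq> w" "z \<noteq> u" unfolding A' by auto
      show "z \<in> X'"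
      proof (cases "z = y")
        case True then show ?thesis unfolding X' by simp
      next
        case False
        then have "z \<in> V" using z \<open>z \<noteq> w\<close> unfolding V' by auto
        moreover have "\<forall>t. (z, t) \<notin> A" using z \<open>z \<noteq> u\<close> unfolding A' by auto
        ultimately show ?thesis using WF(4) unfolding X' by auto
      qed
    qed
  qed
  show ?thesis unfolding W_def using WF(1) V' acA' AV' rV root' X'' by auto
qed

lemma l_attain: "W V A X r \<Longrightarrow> \<exists>T. rooted_spanning_tree V A T \<and> card (tree_leaves V T - X) = l_num V A X"
  using l_upper l_lower l_formula by (metis le_antisym)

lemma l_le: "W V A X r \<Longrightarrow> rooted_spanning_tree V A T \<Longrightarrow> l_num V A X \<le> card (tree_leaves V T - X)"
  using l_lower l_formula by metis

lemma fin_leaves: "W V A X r \<Longrightarrow> finite (tree_leaves V T - X)"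
  unfolding tree_leaves_def W_def by auto

lemma tb_iff: assumes "W V A X r" shows "tree_based V A X \<longleftrightarrow> l_num V A X = 0"
proof
  assume "tree_based V A X"
  then obtain T where "rooted_spanning_tree V A T" "tree_leaves V T \<subseteq> X" unfolding tree_based_def by blast
  then have e: "tree_leaves V T - X = {}" and le: "l_num V A X \<le> card (tree_leaves V T - X)" using l_le[OF assms] by auto
  show "l_num V A X = 0" using le unfolding e by simp
next
  assume "l_num V A X = 0"
  then obtain T where T: "rooted_spanning_tree V A T" "card (tree_leaves V T - X) = 0" using l_attain[OF assms] by auto
  then have "tree_leaves V T - X = {}" using fin_leaves[OF assms] by simp
  then show "tree_based V A X" unfolding tree_based_def using T by blast
qed

lemma card1_mem: "card {x. P x} = 1 \<Longrightarrow> \<exists>x. P x"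
  by (metis (mono_tags, lifting) card_1_singletonE mem_Collect_eq singletonI)

lemma att_l_ge:
  assumes W: "W V A X r" and uv: "(u, v) \<in> A" and w: "w \<notin> V" and y: "y \<notin> V" "w \<noteq> y"
    and V': "V' = V \<union> {w, y}" and A': "A' = (A - {(u, v)}) \<union> {(u, w), (w, v), (w, y)}"
    and X': "X' = X \<union> {y}"
  shows "l_num V A X \<le> l_num V' A' X' + 1"
proof -
  have W': "W V' A' X' r" by (rule att_W[OF assms])
  note WF = W_facts[OF W]
  have uV: "u \<in> V" and vV: "v \<in> V" using uv WF(2) by auto
  obtain T' where T': "rooted_spanning_tree V' A' T'" "card (tree_leaves V' T' - X') = l_num V' A' X'"
    using l_attain[OF W'] by blast
  have T'A: "T' \<subseteq> A'" and T'p: "\<forall>z\<in>V'. z \<noteq> r \<longrightarrow> card {x. (x, z) \<in> T'} = 1"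
    using T'(1) unfolding ST_char[OF W'] by auto
  define T where "T = (T' \<inter> (V \<times> V)) \<union> (if (w, v) \<in> T' then {(u, v)} else {})"
  have TA: "T \<subseteq> A" unfolding T_def using T'A uv w y unfolding A' by auto
  have par: "{x. (x, z) \<in> T} = (if z = v \<and> (w, v) \<in> T' then {u} else {x. (x, z) \<in> T'})" if zV: "z \<in> V" for z
  proof -
    have zwy: "z \<noteq> w" "z \<noteq> y" using zV w y by auto
    have inV: "x \<in> V" if "(x, z) \<in> T'" "\<not> (z = v \<and> x = w)" for x
    proof -
      have "(x, z) \<in> A'" using that T'A by auto
      then have "(x, z) \<in> A" using zwy that(2) unfolding A' by auto
      then show ?thesis using WF(2) by auto
    qed
    show ?thesis
    proof (cases "z = v \<and> (w, v) \<in> T'")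
      case True
      have "card {x. (x, v) \<in> T'} = 1" using T'p True zV V' W unfolding W_def
        by (metis (no_types, lifting) UnCI vV uv)
      then have "{x. (x, v) \<in> T'} = {w}" using True by (metis (mono_tags, lifting) card_1_singletonE mem_Collect_eq singletonD)
      then have "\<forall>x. (x, v) \<in> T' \<longrightarrow> x = w" by blast
      then show ?thesis using True w unfolding T_def by auto
    next
      case False
      then show ?thesis unfolding T_def using inV zV by auto
    qed
  qed
  have "rooted_spanning_tree V A T" unfolding ST_char[OF W]
  proof (intro conjI ballI impI)
    show "T \<subseteq> A" by (rule TA)
    fix z assume zV: "z \<in> V" "z \<noteq> r"
    show "card {x. (x, z) \<in> T} = 1"
    proof (cases "z = v \<and> (w, v) \<in> T'")
      case True then show ?thesis unfolding par[OF zV(1)] by simp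
    next
      case False
      have "z \<in> V'" using zV V' by simp
      then show ?thesis unfolding par[OF zV(1)] using T'p zV(2) False by simp
    qed
  qed
  note Tst = this
  have sub: "tree_leaves V T - X \<subseteq> insert u (tree_leaves V' T' - X')"
  proof
    fix z assume z: "z \<in> tree_leaves V T - X"
    then have zV: "z \<in> V" "z \<notin> X" "\<forall>t. (z, t) \<notin> T" unfolding tree_leaves_def by auto
    show "z \<in> insert u (tree_leaves V' T' - X')"
    proof (cases "z = u")
      case True then show ?thesis by simp
    next
      case False
      have "(z, t) \<notin> T'" for t
      proof
        assume zt: "(z, t) \<in> T'"
        then have "(z, t) \<in> A'" using T'A by auto
        then have "(z, t) \<in> A" using False zV(1) w unfolding A' by auto
        then have "t \<in> V" using WF(2) by auto
        then have "(z, t) \<in> T" unfolding T_def using zt zV(1) by auto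
        then show False using zV(3) by blast
      qed
      then show ?thesis unfolding tree_leaves_def V' X' using zV y by auto
    qed
  qed
  have "l_num V A X \<le> card (tree_leaves V T - X)" by (rule l_le[OF W Tst])
  also have "\<dots> \<le> card (insert u (tree_leaves V' T' - X'))"
    using sub fin_leaves[OF W'] by (intro card_mono) auto
  also have "\<dots> \<le> card (tree_leaves V' T' - X') + 1" by (simp add: card_insert_le_m1 card_insert_if)
  finally show ?thesis using T'(2) by simp
qed

lemma att_l_lt:
  assumes W: "W V A X r" and pos: "l_num V A X = Suc n"
  shows "\<exists>V' A' X'. ((V, A, X), (V', A', X')) \<in> attach_leaf_rel \<and> l_num V' A' X' \<le> n"
proof -
  note WF = W_facts[OF W]
  obtain T where T: "rooted_spanning_tree V A T" "card (tree_leaves V T - X) = Suc n"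
    using l_attain[OF W] pos by auto
  have TA: "T \<subseteq> A" and Tp: "\<forall>z\<in>V. z \<noteq> r \<longrightarrow> card {x. (x, z) \<in> T} = 1"
    using T(1) unfolding ST_char[OF W] by auto
  obtain q where q: "q \<in> tree_leaves V T - X" using T(2) by (metis card.empty ex_in_conv nat.distinct(1))
  then have qV: "q \<in> V" "q \<notin> X" "\<forall>t. (q, t) \<notin> T" unfolding tree_leaves_def by auto
  then obtain v where qv: "(q, v) \<in> A" using WF(4) by blast
  obtain w where w: "w \<notin> V" using ex_new_if_finite[OF infinite_UNIV_nat WF(1)] by blast
  obtain y where y': "y \<notin> insert w V" using ex_new_if_finite[OF infinite_UNIV_nat, of "insert w V"] WF(1) by blast
  then have y: "y \<notin> V" "w \<noteq> y" by auto
  define V' where "V' = V \<union> {w, y}"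
  define A' where "A' = (A - {(q, v)}) \<union> {(q, w), (w, v), (w, y)}"
  define X' where "X' = X \<union> {y}"
  have "\<exists>u v' w' y'. (u, v') \<in> A \<and> w' \<notin> V \<and> y' \<notin> V \<and> w' \<noteq> y' \<and> V' = V \<union> {w', y'} \<and>
       A' = (A - {(u, v')}) \<union> {(u, w'), (w', v'), (w', y')} \<and> X' = X \<union> {y'}"
    using qv w y unfolding V'_def A'_def X'_def by blast
  then have rel: "((V, A, X), (V', A', X')) \<in> attach_leaf_rel"
    unfolding attach_leaf_rel_def by simp
  have W': "W V' A' X' r" by (rule att_W[OF W qv w y V'_def A'_def X'_def])
  define T' where "T' = T \<union> {(q, w), (w, y)}"
  have TV: "T \<subseteq> V \<times> V" using TA WF(2) by auto
  have "rooted_spanning_tree V' A' T'" unfolding ST_char[OF W']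
  proof (intro conjI ballI impI)
    show "T' \<subseteq> A'" unfolding T'_def A'_def using TA qV(3) by auto
    fix z assume zV: "z \<in> V'" "z \<noteq> r"
    consider "z = w" | "z = y" | "z \<in> V" using zV unfolding V'_def by auto
    then show "card {x. (x, z) \<in> T'} = 1"
    proof cases
      case 1
      then have "{x. (x, z) \<in> T'} = {q}" unfolding T'_def using TV w y by auto
      then show ?thesis by simp
    next
      case 2
      then have "{x. (x, z) \<in> T'} = {w}" unfolding T'_def using TV w y by auto
      then show ?thesis by simp
    next
      case 3
      then have "{x. (x, z) \<in> T'} = {x. (x, z) \<in> T}" unfolding T'_def using w y by auto
      then show ?thesis using Tp 3 zV by simp
    qed
  qed
  note T'st = this
  have sub: "tree_leaves V' T' - X' \<subseteq> (tree_leaves V T - X) - {q}"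
  proof
    fix z assume z: "z \<in> tree_leaves V' T' - X'"
    then have zV: "z \<in> V'" "z \<notin> X'" "\<forall>t. (z, t) \<notin> T'" unfolding tree_leaves_def by auto
    have "z \<noteq> w" "z \<noteq> q" using zV(3) unfolding T'_def by auto
    moreover have "z \<noteq> y" using zV(2) unfolding X'_def by auto
    ultimately have "z \<in> V" using zV(1) unfolding V'_def by auto
    then show "z \<in> (tree_leaves V T - X) - {q}"
      using zV \<open>z \<noteq> q\<close> unfolding tree_leaves_def T'_def X'_def by auto
  qed
  have "l_num V' A' X' \<le> card (tree_leaves V' T' - X')" by (rule l_le[OF W' T'st])
  also have "\<dots> \<le> card ((tree_leaves V T - X) - {q})"
    using sub fin_leaves[OF W] by (intro card_mono) auto
  also have "\<dots> = n" using T(2) q fin_leaves[OF W] by simp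
  finally show ?thesis using rel by blast
qed

lemma rel_unf: "((V, A, X), (V', A', X')) \<in> attach_leaf_rel \<Longrightarrow>
  \<exists>u v w y. (u, v) \<in> A \<and> w \<notin> V \<and> y \<notin> V \<and> w \<noteq> y \<and> V' = V \<union> {w, y} \<and>
       A' = (A - {(u, v)}) \<union> {(u, w), (w, v), (w, y)} \<and> X' = X \<union> {y}"
  unfolding attach_leaf_rel_def by simp

lemma t_lower: "((V, A, X), (V', A', X')) \<in> attach_leaf_rel ^^ k \<Longrightarrow> W V A X r \<Longrightarrow> tree_based V' A' X' \<Longrightarrow> l_num V A X \<le> k"
proof (induction k arbitrary: V A X)
  case 0
  then show ?case using tb_iff by simp
next
  case (Suc k)
  from Suc.prems(1) obtain N1 where N1: "((V, A, X), N1) \<in> attach_leaf_rel" "(N1, (V', A', X')) \<in> attach_leaf_rel ^^ k"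
    by (rule relpow_Suc_E2)
  obtain V1 A1 X1 where N1e: "N1 = (V1, A1, X1)" by (cases N1)
  obtain u v w y where uv: "(u, v) \<in> A" "w \<notin> V" "y \<notin> V" "w \<noteq> y" "V1 = V \<union> {w, y}"
       "A1 = (A - {(u, v)}) \<union> {(u, w), (w, v), (w, y)}" "X1 = X \<union> {y}"
    using rel_unf[OF N1(1)[unfolded N1e]] by blast
  have W1: "W V1 A1 X1 r" by (rule att_W[OF Suc.prems(2) uv])
  have "l_num V1 A1 X1 \<le> k" using Suc.IH[OF N1(2)[unfolded N1e] W1 Suc.prems(3)] .
  moreover have "l_num V A X \<le> l_num V1 A1 X1 + 1" by (rule att_l_ge[OF Suc.prems(2) uv])
  ultimately show ?case by simp
qed

lemma t_upper: "W V A X r \<Longrightarrow> l_num V A X = n \<Longrightarrow>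
  \<exists>V' A' X'. ((V, A, X), (V', A', X')) \<in> attach_leaf_rel ^^ n \<and> tree_based V' A' X'"
proof (induction n arbitrary: V A X)
  case 0
  then show ?case using tb_iff by auto
next
  case (Suc n)
  obtain V1 A1 X1 where N1: "((V, A, X), (V1, A1, X1)) \<in> attach_leaf_rel" "l_num V1 A1 X1 \<le> n"
    using att_l_lt[OF Suc.prems] by blast
  obtain u v w y where uv: "(u, v) \<in> A" "w \<notin> V" "y \<notin> V" "w \<noteq> y" "V1 = V \<union> {w, y}"
       "A1 = (A - {(u, v)}) \<union> {(u, w), (w, v), (w, y)}" "X1 = X \<union> {y}"
    using rel_unf[OF N1(1)] by blast
  have W1: "W V1 A1 X1 r" by (rule att_W[OF Suc.prems(1) uv])
  have "l_num V A X \<le> l_num V1 A1 X1 + 1" by (rule att_l_ge[OF Suc.prems(1) uv])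
  then have "l_num V1 A1 X1 = n" using N1(2) Suc.prems(2) by simp
  then obtain V' A' X' where "((V1, A1, X1), (V', A', X')) \<in> attach_leaf_rel ^^ n" "tree_based V' A' X'"
    using Suc.IH[OF W1] by blast
  then show ?case using relpow_Suc_I2[OF N1(1)] by blast
qed

lemma t_formula: assumes "W V A X r" shows "t_num V A X = l_num V A X"
  unfolding t_num_def
proof (rule Least_equality)
  show "\<exists>V' A' X'. ((V, A, X), (V', A', X')) \<in> attach_leaf_rel ^^ l_num V A X \<and> tree_based V' A' X'"
    using t_upper[OF assms] by blast
next
  fix k assume "\<exists>V' A' X'. ((V, A, X), (V', A', X')) \<in> attach_leaf_rel ^^ k \<and> tree_based V' A' X'"
  then show "l_num V A X \<le> k" using t_lower[OF _ assms] by blast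
qed

theorem theorem6:
  fixes V X :: "nat set" and A :: "(nat \<times> nat) set"
  assumes "phylo_net V A X"
  shows "int (l_num V A X) = p_num V A X \<and>
         p_num V A X = int (t_num V A X) \<and>
         int (t_num V A X) = int (card (omnians V A X)) - int (max_matching_size V A X)"
proof -
  have W: "W V A X (root V A)" by (rule phylo_W[OF assms])
  have l: "l_num V A X = card (omnians V A X) - max_matching_size V A X" by (rule l_formula[OF W])
  have d: "d_num V A = card X + card (omnians V A X) - max_matching_size V A X" by (rule d_formula[OF W])
  have t: "t_num V A X = l_num V A X" by (rule t_formula[OF W])
  have m: "max_matching_size V A X \<le> card (omnians V A X)" by (rule m_le_O[OF W])
  show ?thesis unfolding p_num_def using l d t m by simp
qed

end
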